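(* For every integer $T=3k+2$ with $k\ge 1$ and every $\sigma\in\mathfrak S_3$, the vector $\sigma c$ with $c=[2k+1,\,-k,\,-k,\,-k,\,2k+1,\,2k+1]$ defines a facet of $P^T$.
   Context: For an integer $T\ge 2$, let $\Omega_T$ be the set of words $w=s_1s_2\cdots s_T$ over $\{1,2,3\}$ with $s_l\neq s_{l+1}$ for $l=1,\dots,T-1$. For $w\in\Omega_T$ and an ordered pair $ij$, $i\neq j$, let $x_{ij}(w)$ be the number of indices $1\le l\le T-1$ with $s_ls_{l+1}=ij$. Vectors of $\mathbb R^6$ are indexed in the order $[x_{12},x_{13},x_{21},x_{23},x_{31},x_{32}]$. Let $a_w=[x_{12}(w),\dots,x_{32}(w)]$ and $P^T=\mathrm{conv}\{a_w:w\in\Omega_T\}$. $\mathfrak S_3$ acts on $\mathbb R^6$ by $(\sigma c)_{ij}=c_{\sigma(i)\sigma(j)}$. A vector $c$ defines a facet of $P^T$ if $c\cdot a_w\ge0$ for all $w\in\Omega_T$ and $\{x\in P^T: c\cdot x=0\}$ is a facet of $P^T$. *)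

theory Defs
  imports "HOL-Analysis.Analysis" "HOL-Combinatorics.Permutations"
begin

text \<open>Letters are the naturals 1,2,3. A word is a list; positions are 0-indexed,
  so the paper's index l (1..T-1) corresponds to l-1 here.\<close>

definition Omega :: "nat \<Rightarrow> nat list set" where
  "Omega T = {w. length w = T \<and> set w \<subseteq> {1,2,3} \<and>
                 (\<forall>l. Suc l < T \<longrightarrow> w ! l \<noteq> w ! Suc l)}"

definition xcount :: "nat list \<Rightarrow> nat \<Rightarrow> nat \<Rightarrow> nat" where
  "xcount w i j = card {l. Suc l < length w \<and> w ! l = i \<and> w ! Suc l = j}"

definition pairs :: "(nat \<times> nat) list" where
  "pairs = [(1,2),(1,3),(2,1),(2,3),(3,1),(3,2)]"

definition idx :: "6 \<Rightarrow> nat" where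
  "idx k = nat (Rep_bit0 k)"

definition pair_of :: "6 \<Rightarrow> nat \<times> nat" where
  "pair_of k = pairs ! idx k"

definition vec6 :: "real list \<Rightarrow> real ^ 6" where
  "vec6 l = (\<chi> k. l ! idx k)"

definition entry :: "real ^ 6 \<Rightarrow> nat \<Rightarrow> nat \<Rightarrow> real" where
  "entry v i j = v $ (THE k. pair_of k = (i, j))"

definition avec :: "nat list \<Rightarrow> real ^ 6" where
  "avec w = (\<chi> k. real (xcount w (fst (pair_of k)) (snd (pair_of k))))"

definition PT :: "nat \<Rightarrow> (real ^ 6) set" where
  "PT T = convex hull (avec ` Omega T)"

definition act :: "(nat \<Rightarrow> nat) \<Rightarrow> real ^ 6 \<Rightarrow> real ^ 6" where
  "act \<sigma> c = (\<chi> k. entry c (\<sigma> (fst (pair_of k))) (\<sigma> (snd (pair_of k))))"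

definition defines_facet :: "nat \<Rightarrow> real ^ 6 \<Rightarrow> bool" where
  "defines_facet T c \<longleftrightarrow> (\<forall>w\<in>Omega T. c \<bullet> avec w \<ge> 0) \<and>
     {x \<in> PT T. c \<bullet> x = 0} facet_of PT T"

end

theory Submission
  imports Defs
begin
lemma idx_range: "idx k < 6"
proof -
  have "Rep_bit0 k \<in> {0..<2 * int CARD(num1 bit1)}" by (rule Rep_bit0)
  then show ?thesis by (auto simp: idx_def nat_less_iff)
qed
lemma idx_inj: "inj idx"
  unfolding idx_def inj_def
  by (metis Rep_bit0 Rep_bit0_inject atLeastLessThan_iff nat_eq_iff2)
lemma idx_surj: "n < 6 \<Longrightarrow> \<exists>k. idx k = n"
proof -
  assume n: "n < 6"
  have "int n \<in> {0..<2 * int CARD(num1 bit1)}" using n by simp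
  then have "Rep_bit0 (Abs_bit0 (int n) :: 6) = int n" by (rule Abs_bit0_inverse)
  then show ?thesis unfolding idx_def by (metis nat_int)
qed

definition valid :: "nat \<Rightarrow> nat \<Rightarrow> bool" where
  "valid a b \<longleftrightarrow> a \<in> {1,2,3} \<and> b \<in> {1,2,3} \<and> a \<noteq> b"

lemma set_pairs: "set pairs = {(a,b). valid a b}"
  unfolding pairs_def valid_def by auto
lemma length_pairs: "length pairs = 6" by (simp add: pairs_def)
lemma distinct_pairs: "distinct pairs" by (simp add: pairs_def)

lemma pairs_ex: "valid a b \<Longrightarrow> \<exists>n<6. pairs ! n = (a,b)"
proof -
  assume "valid a b"
  then have "(a,b) \<in> set pairs" by (simp add: set_pairs)
  then obtain n where "n < length pairs" "pairs ! n = (a,b)" by (auto simp: in_set_conv_nth)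
  then show ?thesis using length_pairs by auto
qed

lemma pairs_inj: "n < 6 \<Longrightarrow> m < 6 \<Longrightarrow> pairs ! n = pairs ! m \<Longrightarrow> n = m"
  by (simp add: nth_eq_iff_index_eq[OF distinct_pairs] length_pairs)

lemma pairs_valid: "n < 6 \<Longrightarrow> pairs ! n = (a,b) \<Longrightarrow> valid a b"
proof -
  assume n: "n < 6" "pairs ! n = (a,b)"
  have "pairs ! n \<in> set pairs" by (rule nth_mem) (simp add: n length_pairs)
  then show ?thesis using n by (simp add: set_pairs)
qed

lemma pair_of_valid: "pair_of k = (a,b) \<Longrightarrow> valid a b"
  unfolding pair_of_def using pairs_valid idx_range by blast

lemma ex1_pair: "valid a b \<Longrightarrow> \<exists>!k. pair_of k = (a,b)"
proof -
  assume v: "valid a b"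
  obtain n where n: "n < 6" "pairs ! n = (a,b)" using pairs_ex[OF v] by blast
  obtain k where k: "idx k = n" using idx_surj[OF n(1)] by blast
  show ?thesis
  proof (rule ex1I[of _ k])
    show "pair_of k = (a,b)" using k n by (simp add: pair_of_def)
    fix k' assume "pair_of k' = (a,b)"
    then have "pairs ! idx k' = pairs ! idx k" using k n by (simp add: pair_of_def)
    then have "idx k' = idx k" by (rule pairs_inj[OF idx_range idx_range])
    then show "k' = k" using idx_inj by (simp add: inj_def)
  qed
qed

definition K :: "nat \<Rightarrow> nat \<Rightarrow> 6" where "K a b = (THE k. pair_of k = (a,b))"

lemma pair_of_K: assumes "valid a b" shows "pair_of (K a b) = (a,b)"
  unfolding K_def by (rule theI'[OF ex1_pair[OF assms]])

lemma K_pair_of: "K (fst (pair_of k)) (snd (pair_of k)) = k"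
proof -
  have v: "valid (fst (pair_of k)) (snd (pair_of k))" using pair_of_valid[of k] by (cases "pair_of k") auto
  have "pair_of (K (fst (pair_of k)) (snd (pair_of k))) = pair_of k" using pair_of_K[OF v] by simp
  then show ?thesis using ex1_pair[OF v] by (metis prod.collapse)
qed

lemma pair_eq_K: assumes "valid a b" shows "(pair_of k = (a,b)) = (k = K a b)"
  using ex1_pair[OF assms] pair_of_K[OF assms] by blast

lemma entry_K: "entry v a b = v $ K a b" by (simp add: entry_def K_def)

lemma entry_vec6: "n < 6 \<Longrightarrow> pairs ! n = (a,b) \<Longrightarrow> entry (vec6 l) a b = l ! n"
proof -
  assume n: "n < 6" "pairs ! n = (a,b)"
  have v: "valid a b" using pairs_valid n by blast
  have "pairs ! idx (K a b) = pairs ! n" using pair_of_K[OF v] n by (simp add: pair_of_def)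
  then have "idx (K a b) = n" by (rule pairs_inj[OF idx_range n(1)])
  then show ?thesis by (simp add: entry_K vec6_def)
qed


fun ok :: "nat list \<Rightarrow> bool" where
  "ok [] = True"
| "ok [a] = (a \<in> {1,2,3})"
| "ok (a # b # w) = (a \<in> {1,2,3} \<and> a \<noteq> b \<and> ok (b # w))"

definition adj :: "nat list \<Rightarrow> bool" where
  "adj w \<longleftrightarrow> (\<forall>l. Suc l < length w \<longrightarrow> w ! l \<noteq> w ! Suc l)"

lemma adj_cons2: "adj (a # b # w) \<longleftrightarrow> a \<noteq> b \<and> adj (b # w)"
proof
  assume H: "adj (a # b # w)"
  have "a \<noteq> b" using H unfolding adj_def by (erule_tac x=0 in allE) simp
  moreover have "adj (b # w)" unfolding adj_def
  proof (intro allI impI)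
    fix l assume "Suc l < length (b # w)"
    then show "(b # w) ! l \<noteq> (b # w) ! Suc l"
      using H unfolding adj_def by (erule_tac x="Suc l" in allE) simp
  qed
  ultimately show "a \<noteq> b \<and> adj (b # w)" ..
next
  assume H: "a \<noteq> b \<and> adj (b # w)"
  show "adj (a # b # w)" unfolding adj_def
  proof (intro allI impI)
    fix l assume l: "Suc l < length (a # b # w)"
    show "(a # b # w) ! l \<noteq> (a # b # w) ! Suc l"
    proof (cases l)
      case 0 then show ?thesis using H by simp
    next
      case (Suc m) then show ?thesis using H l unfolding adj_def by auto
    qed
  qed
qed

lemma adj_short: "length w \<le> 1 \<Longrightarrow> adj w" unfolding adj_def by auto

lemma ok_iff: "ok w \<longleftrightarrow> set w \<subseteq> {1,2,3} \<and> adj w"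
  by (induction w rule: ok.induct) (auto simp: adj_cons2 adj_short)

lemma Omega_iff: "w \<in> Omega T \<longleftrightarrow> length w = T \<and> ok w"
  unfolding Omega_def ok_iff adj_def by auto

lemma xcount_nil: "xcount [] i j = 0" by (simp add: xcount_def)
lemma xcount_single: "xcount [a] i j = 0" by (simp add: xcount_def)
lemma xcount_cons2: "xcount (a # b # w) i j = (if a = i \<and> b = j then 1 else 0) + xcount (b # w) i j"
proof -
  let ?S = "{l. Suc l < length (b # w) \<and> (b # w) ! l = i \<and> (b # w) ! Suc l = j}"
  have eq: "{l. Suc l < length (a # b # w) \<and> (a # b # w) ! l = i \<and> (a # b # w) ! Suc l = j}
      = (if a = i \<and> b = j then {0} else {}) \<union> Suc ` ?S"
    apply (rule set_eqI)
    subgoal for l by (cases l) auto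
    done
  have fin: "finite ?S" by (rule finite_subset[of _ "{..<length (b#w)}"]) auto
  have "card (Suc ` ?S) = card ?S" by (simp add: card_image)
  moreover have "0 \<notin> Suc ` ?S" by auto
  ultimately show ?thesis unfolding xcount_def eq using fin by (auto simp: card_insert_if)
qed

fun val :: "real ^ 6 \<Rightarrow> nat list \<Rightarrow> real" where
  "val v (a # b # w) = entry v a b + val v (b # w)"
| "val v _ = 0"

lemma valid_ok: "ok (a # b # w) \<Longrightarrow> valid a b"
  by (cases w) (auto simp: valid_def)

lemma avec_nil: "length w \<le> 1 \<Longrightarrow> avec w = 0"
  by (cases w rule: ok.cases) (auto simp: avec_def vec_eq_iff xcount_nil xcount_single)

lemma inner_avec: "ok w \<Longrightarrow> v \<bullet> avec w = val v w"
proof (induction v w rule: val.induct)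
  case (1 v a b w)
  have vab: "valid a b" using valid_ok[OF 1(2)] .
  have ok': "ok (b # w)" using 1(2) by simp
  have split: "avec (a # b # w) = (\<chi> k. if pair_of k = (a,b) then 1 else 0) + avec (b # w)"
    by (simp add: avec_def vec_eq_iff xcount_cons2 prod_eq_iff)
  have "v \<bullet> (\<chi> k. if pair_of k = (a,b) then 1 else 0) = (\<Sum>k\<in>UNIV. if k = K a b then v $ k else 0)"
    unfolding inner_vec_def pair_eq_K[OF vab] by (rule sum.cong) auto
  also have "\<dots> = entry v a b" by (simp add: entry_K)
  finally show ?case using 1(1)[OF ok'] split by (simp add: inner_add_right)
qed (auto simp: avec_nil)

lemma entry_act: "valid a b \<Longrightarrow> entry (act \<sigma> c) a b = entry c (\<sigma> a) (\<sigma> b)"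
  by (simp add: entry_K act_def pair_of_K)

lemma val_act: "ok w \<Longrightarrow> val (act \<sigma> c) w = val c (map \<sigma> w)"
  by (induction "act \<sigma> c" w rule: val.induct) (auto simp: entry_act valid_ok)

lemma ok_map: "\<sigma> permutes {1,2,3} \<Longrightarrow> ok w \<Longrightarrow> ok (map \<sigma> w)"
proof (induction w rule: ok.induct)
  case (2 a) then show ?case using permutes_in_image by fastforce
next
  case (3 a b w)
  then show ?case using permutes_in_image[OF 3(2)] permutes_inj[OF 3(2)]
    by (auto simp: inj_eq)
qed simp


lemma entry_vec6s:
  "entry (vec6 l) 1 2 = l ! 0" "entry (vec6 l) 1 3 = l ! 1" "entry (vec6 l) 2 1 = l ! 2"
  "entry (vec6 l) 2 3 = l ! 3" "entry (vec6 l) 3 1 = l ! 4" "entry (vec6 l) 3 2 = l ! 5"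
  by (rule entry_vec6; simp add: pairs_def)+

definition c0 :: "nat \<Rightarrow> real ^ 6" where
  "c0 k = vec6 [2 * real k + 1, - real k, - real k, - real k, 2 * real k + 1, 2 * real k + 1]"

lemma c0_entries:
  "entry (c0 k) 1 2 = 2 * real k + 1" "entry (c0 k) 1 3 = - real k" "entry (c0 k) 2 1 = - real k"
  "entry (c0 k) 2 3 = - real k" "entry (c0 k) 3 1 = 2 * real k + 1" "entry (c0 k) 3 2 = 2 * real k + 1"
  by (simp_all add: c0_def entry_vec6s entry_vec6s[unfolded One_nat_def])

lemma ok_hd: "ok (d # r) \<Longrightarrow> d \<in> {1,2,3}" by (cases r) auto

lemma c0_ge: "valid a b \<Longrightarrow> entry (c0 k) a b \<ge> - real k"
  unfolding valid_def by (auto simp: c0_entries c0_entries[unfolded One_nat_def])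

lemma c0_step3: "ok (a # b # c # d # r) \<Longrightarrow> entry (c0 k) a b + entry (c0 k) b c + entry (c0 k) c d \<ge> 1"
  using ok_hd[of d r] by (auto simp: c0_entries c0_entries[unfolded One_nat_def])

lemma val_bound:
  "ok u \<Longrightarrow> u \<noteq> [] \<Longrightarrow>
   val (c0 k) u \<ge> real (3*k+1) * real ((length u - 1) div 3) - real k * real (length u - 1)"
proof (induction "length u" arbitrary: u rule: less_induct)
  case less
  show ?case
  proof (cases u rule: ok.cases)
    case (3 a b w)
    note u = 3
    show ?thesis
    proof (cases w)
      case Nil
      then show ?thesis using u less.prems c0_ge[OF valid_ok, of a b "[]" k] by simp
    next
      case (Cons c w')
      note w = Cons
      show ?thesis
      proof (cases w')
        case Nil
        have "entry (c0 k) a b \<ge> - real k" using c0_ge[OF valid_ok] less.prems u w Nil by blast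
        moreover have "entry (c0 k) b c \<ge> - real k" using c0_ge[OF valid_ok] less.prems u w Nil
          by (metis ok.simps(3))
        ultimately show ?thesis using u w Nil by simp
      next
        case (Cons d r)
        have okr: "ok (d # r)" using less.prems u w Cons by simp
        have IH: "val (c0 k) (d # r) \<ge> real (3*k+1) * real (length r div 3) - real k * real (length r)"
          using less.hyps[of "d # r"] okr u w Cons by simp
        have st: "entry (c0 k) a b + entry (c0 k) b c + entry (c0 k) c d \<ge> 1"
          using c0_step3 less.prems u w Cons by blast
        have dv: "(length r + 3) div 3 = length r div 3 + 1" by simp
        have "val (c0 k) u = entry (c0 k) a b + entry (c0 k) b c + entry (c0 k) c d + val (c0 k) (d # r)"
          using u w Cons by simp
        moreover have "length u - 1 = length r + 3" using u w Cons by simp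
        ultimately show ?thesis using IH st dv by (simp add: algebra_simps)
      qed
    qed
  next
    case 1 then show ?thesis using less.prems by simp
  next
    case (2 a) then show ?thesis by simp
  qed
qed

lemma val_nonneg: "ok u \<Longrightarrow> length u = 3 * k + 2 \<Longrightarrow> val (c0 k) u \<ge> 0"
proof -
  assume "ok u" "length u = 3 * k + 2"
  moreover have "(3 * k + 1) div 3 = k" by simp
  ultimately show ?thesis using val_bound[of u k] by fastforce
qed

definition one6 :: "real ^ 6" where "one6 = (\<chi> k. 1)"

lemma val_one: "ok w \<Longrightarrow> val one6 w = real (length w - 1)"
  by (induction one6 w rule: val.induct) (auto simp: entry_K one6_def)

fun pre :: "nat \<Rightarrow> nat list \<Rightarrow> nat list" where
  "pre 0 s = s"
| "pre (Suc n) s = 2 # 1 # 3 # pre n s"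

lemma pre_hd: "\<exists>t. pre n (2 # s) = 2 # t" by (cases n) auto

lemma length_pre: "length (pre n s) = 3 * n + length s" by (induction n) auto

lemma ok_pre: "ok (2 # s) \<Longrightarrow> ok (pre n (2 # s))"
proof (induction n)
  case (Suc n)
  obtain t where t: "pre n (2 # s) = 2 # t" using pre_hd by blast
  show ?case using Suc t by simp
qed simp

lemma xcount_pre: "xcount (pre n (2 # s)) i j =
   n * ((if i = 2 \<and> j = 1 then 1 else 0) + (if i = 1 \<and> j = 3 then 1 else 0) + (if i = 3 \<and> j = 2 then 1 else 0))
   + xcount (2 # s) i j"
proof (induction n)
  case (Suc n)
  obtain t where t: "pre n (2 # s) = 2 # t" using pre_hd by blast
  show ?case using Suc t by (simp add: xcount_cons2)
qed simp

lemma val_pre: "val v (pre n (2 # s)) = real n * (entry v 2 1 + entry v 1 3 + entry v 3 2) + val v (2 # s)"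
proof (induction n)
  case (Suc n)
  obtain t where t: "pre n (2 # s) = 2 # t" using pre_hd by blast
  show ?case using Suc t by (simp add: algebra_simps)
qed simp


lemma cons_pre: "\<exists>t. a # pre n (2 # s) = a # 2 # t" using pre_hd by blast

lemma ok_cons_pre: "ok (2 # s) \<Longrightarrow> a \<in> {1,2,3} \<Longrightarrow> a \<noteq> 2 \<Longrightarrow> ok (a # pre n (2 # s))"
proof -
  assume h: "ok (2 # s)" "a \<in> {1,2,3}" "a \<noteq> 2"
  obtain t where t: "pre n (2 # s) = 2 # t" using pre_hd by blast
  have "ok (pre n (2 # s))" using ok_pre[OF h(1)] .
  then show ?thesis using h t by auto
qed

lemma val_cons_pre: "val v (a # pre n (2 # s)) = entry v a 2 + val v (pre n (2 # s))"
proof -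
  obtain t where t: "pre n (2 # s) = 2 # t" using pre_hd by blast
  then show ?thesis by simp
qed

lemma xcount_cons_pre: "xcount (a # pre n (2 # s)) i j = (if a = i \<and> 2 = j then 1 else 0) + xcount (pre n (2 # s)) i j"
proof -
  obtain t where t: "pre n (2 # s) = 2 # t" using pre_hd by blast
  then show ?thesis by (simp add: xcount_cons2)
qed

definition "w0 m = pre (Suc m) [2,1]"
definition "w1 m = 1 # 3 # pre m [2,1,3]"
definition "w2 m = 2 # 1 # pre m [2,1,3]"
definition "w3 m = pre (Suc m) [2,3]"
definition "w4 m = pre m [2,1,3,1,3]"
definition "w5 m = 1 # 2 # 1 # 3 # pre m [2]"

lemma words_ok: "ok (w0 m)" "ok (w1 m)" "ok (w2 m)" "ok (w3 m)" "ok (w4 m)" "ok (w5 m)"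
  unfolding w0_def w1_def w2_def w3_def w4_def w5_def
  by (auto intro!: ok_pre ok_cons_pre)

lemma words_len: "length (w0 m) = 3 * Suc m + 2" "length (w1 m) = 3 * Suc m + 2"
  "length (w2 m) = 3 * Suc m + 2" "length (w3 m) = 3 * Suc m + 2"
  "length (w4 m) = 3 * Suc m + 2" "length (w5 m) = 3 * Suc m + 2"
  unfolding w0_def w1_def w2_def w3_def w4_def w5_def by (simp_all add: length_pre)

lemmas c0e = c0_entries c0_entries[unfolded One_nat_def]

lemma words_val: "val (c0 (Suc m)) (w0 m) = 0" "val (c0 (Suc m)) (w1 m) = 0"
  "val (c0 (Suc m)) (w2 m) = 0" "val (c0 (Suc m)) (w3 m) = 0"
  "val (c0 (Suc m)) (w4 m) = 0" "val (c0 (Suc m)) (w5 m) > 0"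
  unfolding w0_def w1_def w2_def w3_def w4_def w5_def
  by (simp_all add: val_pre val_cons_pre c0e algebra_simps)

lemma avec_K: "valid a b \<Longrightarrow> avec w $ K a b = real (xcount w a b)"
  by (simp add: avec_def pair_of_K)

lemma valids: "valid 1 2" "valid 1 3" "valid 2 3" "valid 3 1" by (simp_all add: valid_def)

lemma avK: "avec w $ K 1 2 = real (xcount w 1 2)" "avec w $ K 1 3 = real (xcount w 1 3)"
  "avec w $ K 2 3 = real (xcount w 2 3)" "avec w $ K 3 1 = real (xcount w 3 1)"
  by (simp_all only: avec_K valids)

lemma xcs: 
  "xcount (w0 m) 1 2 = 0" "xcount (w0 m) 1 3 = Suc m" "xcount (w0 m) 2 3 = 0" "xcount (w0 m) 3 1 = 0"
  "xcount (w1 m) 1 2 = 0" "xcount (w1 m) 1 3 = m + 2" "xcount (w1 m) 2 3 = 0" "xcount (w1 m) 3 1 = 0"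
  "xcount (w2 m) 1 2 = 1" "xcount (w2 m) 1 3 = m + 1" "xcount (w2 m) 2 3 = 0" "xcount (w2 m) 3 1 = 0"
  "xcount (w3 m) 1 2 = 0" "xcount (w3 m) 1 3 = Suc m" "xcount (w3 m) 2 3 = 1" "xcount (w3 m) 3 1 = 0"
  "xcount (w4 m) 1 2 = 0" "xcount (w4 m) 1 3 = m + 2" "xcount (w4 m) 2 3 = 0" "xcount (w4 m) 3 1 = 1"
  unfolding w0_def w1_def w2_def w3_def w4_def
  by (simp_all add: xcount_pre xcount_cons_pre xcount_cons2 xcount_single)

lemma indep4:
  fixes x1 x2 x3 x4 :: "real ^ 6"
  assumes "x1$p = 0" "x2$p = 1" "x3$p = 0" "x4$p = 0"
    "x1$q = 1" "x2$q = 0" "x3$q = 0" "x4$q = 1"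
    "x1$r = 0" "x2$r = 0" "x3$r = 1" "x4$r = 0"
    "x1$s = 0" "x2$s = 0" "x3$s = 0" "x4$s = 1"
  shows "independent {x1,x2,x3,x4} \<and> card {x1,x2,x3,x4} = 4"
proof
  have d: "x1 \<noteq> x2" "x1 \<noteq> x3" "x1 \<noteq> x4" "x2 \<noteq> x3" "x2 \<noteq> x4" "x3 \<noteq> x4"
    using assms by (metis zero_neq_one)+
  then show "card {x1,x2,x3,x4} = 4" by simp
  show "independent {x1,x2,x3,x4}"
  proof (rule real_vector.independent_if_scalars_zero)
    fix f x assume S: "(\<Sum>x\<in>{x1,x2,x3,x4}. f x *\<^sub>R x) = 0" and x: "x \<in> {x1,x2,x3,x4}"
    have S': "f x1 *\<^sub>R x1 + f x2 *\<^sub>R x2 + f x3 *\<^sub>R x3 + f x4 *\<^sub>R x4 = 0"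
      using S d by (simp add: add.assoc)
    have ep: "f x2 = 0" using arg_cong[OF S', of "\<lambda>v. v $ p"] assms by simp
    have es: "f x4 = 0" using arg_cong[OF S', of "\<lambda>v. v $ s"] assms by simp
    have er: "f x3 = 0" using arg_cong[OF S', of "\<lambda>v. v $ r"] assms by simp
    have eq: "f x1 = 0" using arg_cong[OF S', of "\<lambda>v. v $ q"] assms es by simp
    show "f x = 0" using x ep es er eq by auto
  qed simp
qed

lemma aff4: "aff_dim {avec (w0 m), avec (w1 m), avec (w2 m), avec (w3 m), avec (w4 m)} \<ge> 4"
proof -
  let ?p = "avec (w0 m)"
  let ?S = "{avec (w0 m), avec (w1 m), avec (w2 m), avec (w3 m), avec (w4 m)}"
  let ?B = "{avec (w1 m) - ?p, avec (w2 m) - ?p, avec (w3 m) - ?p, avec (w4 m) - ?p}"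
  have hA: "?p \<in> affine hull ?S" by (rule hull_inc) simp
  have eq: "aff_dim ?S = int (dim ((\<lambda>x. x - ?p) ` ?S))" by (rule aff_dim_eq_dim_subtract[OF hA])
  have sub: "?B \<subseteq> (\<lambda>x. x - ?p) ` ?S" by auto
  have ib: "independent ?B \<and> card ?B = 4"
    apply (rule indep4[where p="K 1 2" and q="K 1 3" and r="K 2 3" and s="K 3 1"])
    apply (simp_all only: vector_minus_component)
    apply (simp_all only: avK)
    apply (simp_all only: xcs)
    done
  have "card ?B \<le> dim ((\<lambda>x. x - ?p) ` ?S)" using independent_card_le_dim[OF sub] ib by blast
  then show ?thesis using eq ib by simp
qed


lemma xcount_map_inj: "inj f \<Longrightarrow> xcount (map f w) (f i) (f j) = xcount w i j"
  unfolding xcount_def by (rule arg_cong[where f=card]) (auto simp: inj_eq)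

lemma act_back: "\<tau> permutes {1,2,3} \<Longrightarrow> act \<tau> (avec (map \<tau> w)) = avec w"
proof -
  assume tp: "\<tau> permutes {1,2,3}"
  show ?thesis unfolding vec_eq_iff
  proof
    fix k
    obtain i j where ij: "pair_of k = (i,j)" by (cases "pair_of k")
    have v: "valid i j" using pair_of_valid[OF ij] .
    have v': "valid (\<tau> i) (\<tau> j)" using v permutes_in_image[OF tp] permutes_inj[OF tp]
      unfolding valid_def by (auto simp: inj_eq)
    have "act \<tau> (avec (map \<tau> w)) $ k = entry (avec (map \<tau> w)) (\<tau> i) (\<tau> j)"
      by (simp add: act_def ij)
    also have "\<dots> = real (xcount (map \<tau> w) (\<tau> i) (\<tau> j))" by (simp add: entry_K avec_K[OF v'])
    also have "\<dots> = real (xcount w i j)" by (simp add: xcount_map_inj[OF permutes_inj[OF tp]])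
    also have "\<dots> = avec w $ k" by (simp add: avec_def ij)
    finally show "act \<tau> (avec (map \<tau> w)) $ k = avec w $ k" .
  qed
qed

lemma linear_act: "linear (act \<tau>)"
  by (rule linearI) (simp_all add: act_def entry_K vec_eq_iff algebra_simps)

theorem proposition9:
  fixes k T :: nat and \<sigma> :: "nat \<Rightarrow> nat"
  assumes "k \<ge> 1" and "T = 3 * k + 2" and "\<sigma> permutes {1, 2, 3}"
  shows "defines_facet T (act \<sigma> (vec6 [2 * real k + 1, - real k, - real k, - real k,
                                       2 * real k + 1, 2 * real k + 1]))"
proof -
  obtain m where km: "k = Suc m" using assms(1) by (cases k) auto
  define c' where "c' = act \<sigma> (c0 k)"
  have cdef: "act \<sigma> (vec6 [2 * real k + 1, - real k, - real k, - real k,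
                                       2 * real k + 1, 2 * real k + 1]) = c'"
    by (simp add: c'_def c0_def)
  define \<tau> where "\<tau> = inv \<sigma>"
  have tp: "\<tau> permutes {1,2,3}" unfolding \<tau>_def by (rule permutes_inv[OF assms(3)])
  have st: "\<And>x. \<sigma> (\<tau> x) = x" unfolding \<tau>_def using permutes_inverses(1)[OF assms(3)] by simp
  have mapst: "\<And>w. map \<sigma> (map \<tau> w) = w" by (simp add: st map_idI)
  have inner_c': "\<And>w. ok w \<Longrightarrow> c' \<bullet> avec w = val (c0 k) (map \<sigma> w)"
    using inner_avec val_act c'_def by simp
  have nonneg: "\<forall>w\<in>Omega T. c' \<bullet> avec w \<ge> 0"
  proof
    fix w assume "w \<in> Omega T"
    then have w: "ok w" "length w = T" by (auto simp: Omega_iff)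
    show "c' \<bullet> avec w \<ge> 0" using inner_c'[OF w(1)] val_nonneg[OF ok_map[OF assms(3) w(1)]] w(2) assms(2)
      by simp
  qed
  have PTc: "PT T \<subseteq> {x. c' \<bullet> x \<ge> 0}"
    unfolding PT_def by (rule hull_minimal) (use nonneg convex_halfspace_ge in auto)
  have cvx: "convex (PT T)" by (simp add: PT_def convex_convex_hull)
  define F where "F = {x \<in> PT T. c' \<bullet> x = 0}"
  have Feq: "F = PT T \<inter> {x. c' \<bullet> x = 0}" by (auto simp: F_def)
  have face: "F face_of PT T" unfolding Feq
    by (rule face_of_Int_supporting_hyperplane_ge[OF cvx]) (use PTc in auto)
  have word_in: "\<And>w. ok w \<Longrightarrow> length w = T \<Longrightarrow> avec (map \<tau> w) \<in> PT T"
  proof -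
    fix w assume w: "ok w" "length w = T"
    then have "map \<tau> w \<in> Omega T" using ok_map[OF tp] by (simp add: Omega_iff)
    then show "avec (map \<tau> w) \<in> PT T" unfolding PT_def by (intro hull_inc) auto
  qed
  have cval: "\<And>w. ok w \<Longrightarrow> c' \<bullet> avec (map \<tau> w) = val (c0 k) w"
    using inner_c' ok_map[OF tp] mapst by metis
  have inF: "\<And>w. ok w \<Longrightarrow> length w = T \<Longrightarrow> val (c0 k) w = 0 \<Longrightarrow> avec (map \<tau> w) \<in> F"
    unfolding F_def using word_in cval by auto
  have lenT: "\<And>w. length w = 3 * Suc m + 2 \<Longrightarrow> length w = T" using assms(2) km by simp
  let ?Q = "{avec (map \<tau> (w0 m)), avec (map \<tau> (w1 m)), avec (map \<tau> (w2 m)), avec (map \<tau> (w3 m)), avec (map \<tau> (w4 m))}"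
  have vk: "val (c0 k) (w0 m) = 0" "val (c0 k) (w1 m) = 0" "val (c0 k) (w2 m) = 0"
    "val (c0 k) (w3 m) = 0" "val (c0 k) (w4 m) = 0" using words_val km by simp_all
  have QF: "?Q \<subseteq> F"
    using inF[OF words_ok(1) lenT[OF words_len(1)] vk(1)] inF[OF words_ok(2) lenT[OF words_len(2)] vk(2)]
      inF[OF words_ok(3) lenT[OF words_len(3)] vk(3)] inF[OF words_ok(4) lenT[OF words_len(4)] vk(4)]
      inF[OF words_ok(5) lenT[OF words_len(5)] vk(5)] by simp
  have img: "act \<tau> ` ?Q = {avec (w0 m), avec (w1 m), avec (w2 m), avec (w3 m), avec (w4 m)}"
    by (simp add: act_back[OF tp])
  have "4 \<le> aff_dim (act \<tau> ` ?Q)" using img aff4 by simp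
  also have "\<dots> \<le> aff_dim ?Q" by (rule aff_dim_linear_image_le[OF linear_act])
  also have "\<dots> \<le> aff_dim F" by (rule aff_dim_subset[OF QF])
  finally have ge4: "4 \<le> aff_dim F" .
  have q5: "avec (map \<tau> (w5 m)) \<in> PT T" using word_in[OF words_ok(6) lenT[OF words_len(6)]] .
  have "c' \<bullet> avec (map \<tau> (w5 m)) > 0" using cval[OF words_ok(6)] words_val(6) km by simp
  then have "avec (map \<tau> (w5 m)) \<notin> F" unfolding F_def by auto
  then have FneP: "F \<noteq> PT T" using q5 by blast
  have lt: "aff_dim F < aff_dim (PT T)" by (rule face_of_aff_dim_lt[OF cvx face FneP])
  have one_ne: "one6 \<noteq> 0" by (simp add: one6_def vec_eq_iff)
  have hyp: "PT T \<subseteq> {x. one6 \<bullet> x = real (T - 1)}"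
    unfolding PT_def
  proof (rule hull_minimal)
    show "avec ` Omega T \<subseteq> {x. one6 \<bullet> x = real (T - 1)}"
      using inner_avec val_one by (auto simp: Omega_iff)
  qed (rule convex_hyperplane)
  have "aff_dim (PT T) \<le> aff_dim {x. one6 \<bullet> x = real (T - 1)}" by (rule aff_dim_subset[OF hyp])
  also have "\<dots> = 5" using one_ne by simp
  finally have le5: "aff_dim (PT T) \<le> 5" .
  have Fne: "F \<noteq> {}" using QF by auto
  have "aff_dim F = aff_dim (PT T) - 1" using ge4 lt le5 by linarith
  then show ?thesis unfolding defines_facet_def cdef facet_of_def
    using nonneg face Fne F_def by simp
qed

end
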